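(* Let $c\ge2$, let $G$ be a graph, $k\ge0$, $v\in V(G)$, and let $H_v\subseteq V(G)\setminus\{v\}$ be such that $G\setminus H_v$ contains no $\theta_c$ minor. Let $D_1,\dots,D_s$ be the connected components of $G\setminus(H_v\cup\{v\})$ that contain a neighbor of $v$, and assume each $D_i$ contains a vertex adjacent to some vertex of $H_v$. Let $\mathcal{G}$ be the bipartite graph with parts $H_v$ and $D=\{d_1,\dots,d_s\}$, where $w\in H_v$ is adjacent to $d_i$ iff $w$ has a neighbor in $D_i$. Let $S\subseteq H_v$ and $T\subseteq D$ be such that $S$ has $|S|$ $c$-stars in $T$ in $\mathcal{G}$ and every neighbor in $\mathcal{G}$ of a vertex of $T$ lies in $S$. Let $G_R$ be obtained from $G$ by deleting all edges between $v$ and vertices of $\bigcup_{d_i\in T}D_i$, and, for each $w\in S$, adding edges between $v$ and $w$ so that $v$ and $w$ are joined by at least $c$ parallel edges (adding none if they already are). Then $G$ has a set of at most $k$ vertices whose deletion leaves a graph with no $\theta_c$ minor if and only if $G_R$ has such a set.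
   Context: Graphs may have parallel edges; contraction keeps parallel edges and deletes loops. $\theta_c$ is the graph with two vertices joined by $c$ parallel edges. In a bipartite graph with parts $A,B$, for $S\subseteq A$, $T\subseteq B$, $S$ has $|S|$ $c$-stars in $T$ if to each $x\in S$ one can associate $F_x\subseteq N(x)\cap T$ with $|F_x|=c$ and $F_x\cap F_y=\emptyset$ for distinct $x,y\in S$. *)

theory Defs
  imports Main
begin

text \<open>Finite loopless multigraphs: a vertex set and a symmetric edge-multiplicity
function (number of parallel edges between two vertices).\<close>

record 'a mgraph =
  verts :: "'a set"
  mult  :: "'a \<Rightarrow> 'a \<Rightarrow> nat"

definition wf_mgraph :: "'a mgraph \<Rightarrow> bool" where
  "wf_mgraph G \<longleftrightarrow> finite (verts G)
     \<and> (\<forall>x y. mult G x y = mult G y x)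
     \<and> (\<forall>x. mult G x x = 0)
     \<and> (\<forall>x y. mult G x y > 0 \<longrightarrow> x \<in> verts G \<and> y \<in> verts G)"

definition adj :: "'a mgraph \<Rightarrow> 'a \<Rightarrow> 'a \<Rightarrow> bool" where
  "adj G x y \<longleftrightarrow> mult G x y > 0"

definition delete_verts :: "'a mgraph \<Rightarrow> 'a set \<Rightarrow> 'a mgraph" where
  "delete_verts G X = \<lparr> verts = verts G - X,
     mult = (\<lambda>x y. if x \<in> X \<or> y \<in> X then 0 else mult G x y) \<rparr>"

definition connected_set :: "'a mgraph \<Rightarrow> 'a set \<Rightarrow> bool" where
  "connected_set G X \<longleftrightarrow> X \<noteq> {} \<and> X \<subseteq> verts G \<and>
     (\<forall>x\<in>X. \<forall>y\<in>X. (x, y) \<in> {(a, b). a \<in> X \<and> b \<in> X \<and> adj G a b}\<^sup>*)"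

definition components :: "'a mgraph \<Rightarrow> 'a set set" where
  "components G = {C. connected_set G C \<and>
     (\<forall>x\<in>C. \<forall>y\<in>verts G. adj G x y \<longrightarrow> y \<in> C)}"

text \<open>H is a minor of G, via a minor model: disjoint connected branch sets, and
for distinct branch vertices x, y at least (mult H x y) edges of G between the
branch sets of x and y (distinct pairs use disjoint edge sets, so this is an
injective assignment of edges of H to edges of G).\<close>
definition has_minor :: "'a mgraph \<Rightarrow> 'b mgraph \<Rightarrow> bool" where
  "has_minor G H \<longleftrightarrow> (\<exists>\<phi> :: 'b \<Rightarrow> 'a set.
     (\<forall>x\<in>verts H. connected_set G (\<phi> x)) \<and>
     (\<forall>x\<in>verts H. \<forall>y\<in>verts H. x \<noteq> y \<longrightarrow> \<phi> x \<inter> \<phi> y = {}) \<and>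
     (\<forall>x\<in>verts H. \<forall>y\<in>verts H. x \<noteq> y \<longrightarrow>
        mult H x y \<le> (\<Sum>a\<in>\<phi> x. \<Sum>b\<in>\<phi> y. mult G a b)))"

definition theta :: "nat \<Rightarrow> nat mgraph" where
  "theta c = \<lparr> verts = {0, 1},
     mult = (\<lambda>x y. if (x = 0 \<and> y = 1) \<or> (x = 1 \<and> y = 0) then c else 0) \<rparr>"

definition theta_free :: "nat \<Rightarrow> 'a mgraph \<Rightarrow> bool" where
  "theta_free c G \<longleftrightarrow> \<not> has_minor G (theta c)"

definition theta_deletion_set :: "nat \<Rightarrow> nat \<Rightarrow> 'a mgraph \<Rightarrow> bool" where
  "theta_deletion_set c k G \<longleftrightarrow>
     (\<exists>X. X \<subseteq> verts G \<and> card X \<le> k \<and> theta_free c (delete_verts G X))"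

definition D_comps :: "'a mgraph \<Rightarrow> 'a \<Rightarrow> 'a set \<Rightarrow> 'a set set" where
  "D_comps G v Hv = {C \<in> components (delete_verts G (insert v Hv)).
                       \<exists>x\<in>C. adj G v x}"

definition badj :: "'a mgraph \<Rightarrow> 'a \<Rightarrow> 'a set \<Rightarrow> bool" where
  "badj G w C \<longleftrightarrow> (\<exists>x\<in>C. adj G w x)"

definition has_c_stars :: "nat \<Rightarrow> 'a mgraph \<Rightarrow> 'a set \<Rightarrow> 'a set set \<Rightarrow> bool" where
  "has_c_stars c G S T \<longleftrightarrow> (\<exists>F :: 'a \<Rightarrow> 'a set set.
     (\<forall>x\<in>S. F x \<subseteq> {C \<in> T. badj G x C} \<and> card (F x) = c) \<and>
     (\<forall>x\<in>S. \<forall>y\<in>S. x \<noteq> y \<longrightarrow> F x \<inter> F y = {}))"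

definition reduce :: "nat \<Rightarrow> 'a mgraph \<Rightarrow> 'a \<Rightarrow> 'a set \<Rightarrow> 'a set set \<Rightarrow> 'a mgraph" where
  "reduce c G v S T = \<lparr> verts = verts G,
     mult = (\<lambda>a b.
       if (a = v \<and> b \<in> \<Union>T) \<or> (b = v \<and> a \<in> \<Union>T) then 0
       else if (a = v \<and> b \<in> S) \<or> (b = v \<and> a \<in> S) then max (mult G a b) c
       else mult G a b) \<rparr>"

end

theory Submission
  imports Defs
begin


definition res :: "'a mgraph \<Rightarrow> 'a set \<Rightarrow> 'a mgraph" where
  "res G U = delete_verts G (verts G - U)"

lemma res_verts[simp]: "verts (res G U) = verts G \<inter> U"
  by (auto simp: res_def delete_verts_def)

lemma res_mult[simp]: "a \<in> U \<Longrightarrow> b \<in> U \<Longrightarrow> mult (res G U) a b = mult G a b"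
  by (auto simp: res_def delete_verts_def)

definition crel :: "'a mgraph \<Rightarrow> 'a set \<Rightarrow> ('a \<times> 'a) set" where
  "crel G A = {(a, b). a \<in> A \<and> b \<in> A \<and> adj G a b}"

lemma connected_set_iff:
  "connected_set G X \<longleftrightarrow> X \<noteq> {} \<and> X \<subseteq> verts G \<and> (\<forall>x\<in>X. \<forall>y\<in>X. (x, y) \<in> (crel G X)\<^sup>*)"
  by (simp add: connected_set_def crel_def)

lemma theta_minor_iff:
  "has_minor G (theta c) \<longleftrightarrow> (\<exists>A B. connected_set G A \<and> connected_set G B \<and> A \<inter> B = {}
     \<and> c \<le> (\<Sum>a\<in>A. \<Sum>b\<in>B. mult G a b) \<and> c \<le> (\<Sum>b\<in>B. \<Sum>a\<in>A. mult G b a))"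
proof
  assume "has_minor G (theta c)"
  then obtain \<phi> :: "nat \<Rightarrow> 'a set" where
    h1: "\<forall>x\<in>{0,1}. connected_set G (\<phi> x)" and
    h2: "\<forall>x\<in>{0::nat,1}. \<forall>y\<in>{0,1}. x \<noteq> y \<longrightarrow> \<phi> x \<inter> \<phi> y = {}" and
    h3: "\<forall>x\<in>{0::nat,1}. \<forall>y\<in>{0,1}. x \<noteq> y \<longrightarrow>
        mult (theta c) x y \<le> (\<Sum>a\<in>\<phi> x. \<Sum>b\<in>\<phi> y. mult G a b)"
    unfolding has_minor_def by (auto simp: theta_def)
  have "c \<le> (\<Sum>a\<in>\<phi> 0. \<Sum>b\<in>\<phi> 1. mult G a b)" using h3 by (auto simp: theta_def)
  moreover have "c \<le> (\<Sum>a\<in>\<phi> 1. \<Sum>b\<in>\<phi> 0. mult G a b)" using h3 by (auto simp: theta_def)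
  ultimately show "\<exists>A B. connected_set G A \<and> connected_set G B \<and> A \<inter> B = {}
     \<and> c \<le> (\<Sum>a\<in>A. \<Sum>b\<in>B. mult G a b) \<and> c \<le> (\<Sum>b\<in>B. \<Sum>a\<in>A. mult G b a)"
    using h1 h2 by (intro exI[of _ "\<phi> 0"] exI[of _ "\<phi> 1"]) auto
next
  assume "\<exists>A B. connected_set G A \<and> connected_set G B \<and> A \<inter> B = {}
     \<and> c \<le> (\<Sum>a\<in>A. \<Sum>b\<in>B. mult G a b) \<and> c \<le> (\<Sum>b\<in>B. \<Sum>a\<in>A. mult G b a)"
  then obtain A B where h: "connected_set G A" "connected_set G B" "A \<inter> B = {}"
    "c \<le> (\<Sum>a\<in>A. \<Sum>b\<in>B. mult G a b)" "c \<le> (\<Sum>b\<in>B. \<Sum>a\<in>A. mult G b a)" by blast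
  show "has_minor G (theta c)" unfolding has_minor_def
  proof (intro exI[of _ "\<lambda>x::nat. if x = 0 then A else B"] conjI ballI impI)
    fix x :: nat assume "x \<in> verts (theta c)"
    then show "connected_set G (if x = 0 then A else B)" using h by (auto simp: theta_def)
  next
    fix x y :: nat assume "x \<in> verts (theta c)" "y \<in> verts (theta c)" "x \<noteq> y"
    then have "(x = 0 \<and> y = 1) \<or> (x = 1 \<and> y = 0)" by (auto simp: theta_def)
    then show "(if x = 0 then A else B) \<inter> (if y = 0 then A else B) = {}" using h by auto
  next
    fix x y :: nat assume "x \<in> verts (theta c)" "y \<in> verts (theta c)" "x \<noteq> y"
    then have "(x = 0 \<and> y = 1) \<or> (x = 1 \<and> y = 0)" by (auto simp: theta_def)
    then show "mult (theta c) x y \<le> (\<Sum>a\<in>(if x = 0 then A else B). \<Sum>b\<in>(if y = 0 then A else B). mult G a b)"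
      using h by (auto simp: theta_def)
  qed
qed

lemma theta_minor_intro:
  assumes sym: "\<forall>x y. mult G x y = mult G y x"
    and "connected_set G A" "connected_set G B" "A \<inter> B = {}"
    and le: "c \<le> (\<Sum>a\<in>A. \<Sum>b\<in>B. mult G a b)"
  shows "has_minor G (theta c)"
proof -
  have "(\<Sum>b\<in>B. \<Sum>a\<in>A. mult G b a) = (\<Sum>b\<in>B. \<Sum>a\<in>A. mult G a b)"
    by (rule sum.cong[OF refl], rule sum.cong[OF refl], rule spec[OF spec[OF sym]])
  also have "\<dots> = (\<Sum>a\<in>A. \<Sum>b\<in>B. mult G a b)" by (rule sum.swap)
  finally have "c \<le> (\<Sum>b\<in>B. \<Sum>a\<in>A. mult G b a)" using le by simp
  then show ?thesis unfolding theta_minor_iff using assms(2-5) by blast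
qed

definition subg :: "'a mgraph \<Rightarrow> 'a mgraph \<Rightarrow> bool" where
  "subg G1 G2 \<longleftrightarrow> verts G1 \<subseteq> verts G2 \<and> (\<forall>a\<in>verts G1. \<forall>b\<in>verts G1. mult G1 a b \<le> mult G2 a b)"

lemma connected_mono:
  assumes "subg G1 G2" "connected_set G1 X" shows "connected_set G2 X"
proof -
  have X: "X \<subseteq> verts G1" using assms(2) by (simp add: connected_set_iff)
  have "crel G1 X \<subseteq> crel G2 X"
  proof
    fix p assume "p \<in> crel G1 X"
    then obtain a b where p: "p = (a, b)" "a \<in> X" "b \<in> X" "0 < mult G1 a b"
      unfolding crel_def adj_def by auto
    have "mult G1 a b \<le> mult G2 a b" using assms(1) X p unfolding subg_def by blast
    then show "p \<in> crel G2 X" using p unfolding crel_def adj_def by auto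
  qed
  then have "(crel G1 X)\<^sup>* \<subseteq> (crel G2 X)\<^sup>*" by (rule rtrancl_mono)
  moreover have "verts G1 \<subseteq> verts G2" using assms(1) by (simp add: subg_def)
  ultimately show ?thesis using assms(2) unfolding connected_set_iff by blast
qed

lemma minor_mono:
  assumes "subg G1 G2" "has_minor G1 (theta c)" shows "has_minor G2 (theta c)"
proof -
  obtain A B where h: "connected_set G1 A" "connected_set G1 B" "A \<inter> B = {}"
    "c \<le> (\<Sum>a\<in>A. \<Sum>b\<in>B. mult G1 a b)" "c \<le> (\<Sum>b\<in>B. \<Sum>a\<in>A. mult G1 b a)"
    using assms(2) unfolding theta_minor_iff by blast
  have AB: "A \<subseteq> verts G1" "B \<subseteq> verts G1" using h by (auto simp: connected_set_iff)
  have "(\<Sum>a\<in>A. \<Sum>b\<in>B. mult G1 a b) \<le> (\<Sum>a\<in>A. \<Sum>b\<in>B. mult G2 a b)"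
    apply (intro sum_mono) using assms(1) AB unfolding subg_def by blast
  moreover have "(\<Sum>b\<in>B. \<Sum>a\<in>A. mult G1 b a) \<le> (\<Sum>b\<in>B. \<Sum>a\<in>A. mult G2 b a)"
    apply (intro sum_mono) using assms(1) AB unfolding subg_def by blast
  ultimately show ?thesis unfolding theta_minor_iff
    using h connected_mono[OF assms(1)] by (meson order_trans)
qed


definition sepd :: "'a mgraph \<Rightarrow> 'a set \<Rightarrow> 'a set \<Rightarrow> bool" where
  "sepd G V1 V2 \<longleftrightarrow> (\<forall>a b. a \<in> V1 - V2 \<longrightarrow> b \<in> V2 - V1 \<longrightarrow> mult G a b = 0 \<and> mult G b a = 0)"

lemma sepd_sym: "sepd G V1 V2 \<Longrightarrow> sepd G V2 V1"
  unfolding sepd_def by blast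

lemma reach:
  assumes sep: "sepd G V1 V2"
    and cap: "V1 \<inter> V2 \<subseteq> {v}" and cov: "verts G \<subseteq> V1 \<union> V2" and A: "A \<subseteq> verts G"
    and x: "x \<in> A \<inter> V1"
    and r: "(x, y) \<in> (crel G A)\<^sup>*"
  shows "(y \<in> V1 \<longrightarrow> (x, y) \<in> (crel (res G V1) (A \<inter> V1))\<^sup>*) \<and>
         (y \<notin> V1 \<longrightarrow> v \<in> A \<and> (x, v) \<in> (crel (res G V1) (A \<inter> V1))\<^sup>*)"
  using r
proof (induction rule: rtrancl_induct)
  case base then show ?case using x by auto
next
  case (step y z)
  have yz: "y \<in> A" "z \<in> A" "0 < mult G y z" using step.hyps(2) by (auto simp: crel_def adj_def)
  have edge: "(y, z) \<in> crel (res G V1) (A \<inter> V1)" if "y \<in> V1" "z \<in> V1"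
    using that yz by (auto simp: crel_def adj_def)
  show ?case
  proof (cases "y \<in> V1")
    case True
    then have IH: "(x, y) \<in> (crel (res G V1) (A \<inter> V1))\<^sup>*" using step.IH by blast
    show ?thesis
    proof (cases "z \<in> V1")
      case True
      then show ?thesis using IH edge \<open>y \<in> V1\<close> by (meson rtrancl.rtrancl_into_rtrancl)
    next
      case False
      then have "z \<in> V2 - V1" using yz A cov by auto
      then have "y \<notin> V1 - V2" using sep yz unfolding sepd_def by fastforce
      then have "y = v" using \<open>y \<in> V1\<close> cap by auto
      then show ?thesis using False IH yz by auto
    qed
  next
    case False
    then have IH: "v \<in> A \<and> (x, v) \<in> (crel (res G V1) (A \<inter> V1))\<^sup>*" using step.IH by blast
    show ?thesis
    proof (cases "z \<in> V1")
      case True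
      have "y \<in> V2 - V1" using False yz A cov by auto
      then have "z \<notin> V1 - V2" using sep yz unfolding sepd_def by fastforce
      then have "z = v" using True cap by auto
      then show ?thesis using IH by auto
    qed (use IH in auto)
  qed
qed

lemma conn_restrict:
  assumes sep: "sepd G V1 V2"
    and cap: "V1 \<inter> V2 \<subseteq> {v}" and cov: "verts G \<subseteq> V1 \<union> V2"
    and c: "connected_set G A" and ne: "A \<inter> V1 \<noteq> {}"
  shows "connected_set (res G V1) (A \<inter> V1)"
proof -
  have A: "A \<subseteq> verts G" using c by (simp add: connected_set_iff)
  have "(x, y) \<in> (crel (res G V1) (A \<inter> V1))\<^sup>*" if "x \<in> A \<inter> V1" "y \<in> A \<inter> V1" for x y
  proof -
    have "(x, y) \<in> (crel G A)\<^sup>*" using c that unfolding connected_set_iff by blast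
    then show ?thesis using reach[OF sep cap cov A that(1)] that(2) by blast
  qed
  then show ?thesis using ne A unfolding connected_set_iff by auto
qed

lemma conn_side:
  assumes sep: "sepd G V1 V2"
    and cap: "V1 \<inter> V2 \<subseteq> {v}" and cov: "verts G \<subseteq> V1 \<union> V2"
    and c: "connected_set G A" and nv: "v \<notin> A"
  shows "A \<subseteq> V1 \<or> A \<subseteq> V2"
proof (rule ccontr)
  assume "\<not> ?thesis"
  then obtain y z where y: "y \<in> A" "y \<notin> V1" and z: "z \<in> A" "z \<notin> V2" by blast
  have A: "A \<subseteq> verts G" using c by (simp add: connected_set_iff)
  have zV1: "z \<in> A \<inter> V1" using z A cov by auto
  have "(z, y) \<in> (crel G A)\<^sup>*" using c y z unfolding connected_set_iff by blast
  from reach[OF sep cap cov A zV1 this] y nv show False by blast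
qed

lemma quarter:
  assumes sep: "sepd G V1 V2"
    and cap: "V1 \<inter> V2 \<subseteq> {v}" and cov: "verts G \<subseteq> V1 \<union> V2" and fin: "finite (verts G)"
    and cA: "connected_set G A" and cB: "connected_set G B" and dis: "A \<inter> B = {}"
    and l1: "c \<le> (\<Sum>a\<in>A. \<Sum>b\<in>B. mult G a b)" and l2: "c \<le> (\<Sum>b\<in>B. \<Sum>a\<in>A. mult G b a)"
    and c1: "c \<ge> 1" and BV: "B \<subseteq> V1" and nv: "v \<notin> B"
  shows "has_minor (res G V1) (theta c)"
proof -
  have A: "A \<subseteq> verts G" and B: "B \<subseteq> verts G" using cA cB by (auto simp: connected_set_iff)
  have finA: "finite A" and finB: "finite B" using A B fin finite_subset by auto
  have z: "mult G a b = 0 \<and> mult G b a = 0" if "a \<in> A - V1" "b \<in> B" for a b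
  proof -
    have "a \<in> V2 - V1" using that A cov by auto
    moreover have "b \<in> V1 - V2" using that BV cap nv by auto
    ultimately show ?thesis using sep unfolding sepd_def by blast
  qed
  have e1: "(\<Sum>a\<in>A. \<Sum>b\<in>B. mult G a b) = (\<Sum>a\<in>A \<inter> V1. \<Sum>b\<in>B. mult G a b)"
    by (rule sum.mono_neutral_right[OF finA]) (auto simp: z)
  have e2: "(\<Sum>b\<in>B. \<Sum>a\<in>A. mult G b a) = (\<Sum>b\<in>B. \<Sum>a\<in>A \<inter> V1. mult G b a)"
    by (rule sum.cong[OF refl], rule sum.mono_neutral_right[OF finA]) (auto simp: z)
  have ne: "A \<inter> V1 \<noteq> {}"
  proof
    assume "A \<inter> V1 = {}" then show False using l1 e1 c1 by simp
  qed
  have BB: "B \<inter> V1 = B" using BV by auto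
  have cA': "connected_set (res G V1) (A \<inter> V1)" by (rule conn_restrict[OF sep cap cov cA ne])
  have cB': "connected_set (res G V1) B"
    using conn_restrict[OF sep cap cov cB] BB cB by (auto simp: connected_set_iff)
  have r1: "(\<Sum>a\<in>A \<inter> V1. \<Sum>b\<in>B. mult (res G V1) a b) = (\<Sum>a\<in>A \<inter> V1. \<Sum>b\<in>B. mult G a b)"
    using BV by (intro sum.cong refl) auto
  have r2: "(\<Sum>b\<in>B. \<Sum>a\<in>A \<inter> V1. mult (res G V1) b a) = (\<Sum>b\<in>B. \<Sum>a\<in>A \<inter> V1. mult G b a)"
    using BV by (intro sum.cong refl) auto
  show ?thesis unfolding theta_minor_iff
    apply (rule exI[of _ "A \<inter> V1"], rule exI[of _ B])
    using cA' cB' dis l1 l2 e1 e2 r1 r2 by auto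
qed

lemma glue:
  assumes sep: "sepd G V1 V2"
    and cap: "V1 \<inter> V2 \<subseteq> {v}" and cov: "verts G \<subseteq> V1 \<union> V2" and fin: "finite (verts G)"
    and c1: "c \<ge> 1" and m: "has_minor G (theta c)"
  shows "has_minor (res G V1) (theta c) \<or> has_minor (res G V2) (theta c)"
proof -
  obtain A B where h: "connected_set G A" "connected_set G B" "A \<inter> B = {}"
    "c \<le> (\<Sum>a\<in>A. \<Sum>b\<in>B. mult G a b)" "c \<le> (\<Sum>b\<in>B. \<Sum>a\<in>A. mult G b a)"
    using m unfolding theta_minor_iff by blast
  have sep2: "sepd G V2 V1" using sep by (rule sepd_sym)
  have cap2: "V2 \<inter> V1 \<subseteq> {v}" and cov2: "verts G \<subseteq> V2 \<union> V1" using cap cov by auto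
  show ?thesis
  proof (cases "v \<in> B")
    case False
    then have "B \<subseteq> V1 \<or> B \<subseteq> V2" using conn_side[OF sep cap cov h(2)] by blast
    then show ?thesis
      using quarter[OF sep cap cov fin h c1 _ False] quarter[OF sep2 cap2 cov2 fin h c1 _ False]
      by blast
  next
    case True
    then have nA: "v \<notin> A" using h(3) by auto
    have h3: "B \<inter> A = {}" using h(3) by auto
    have "A \<subseteq> V1 \<or> A \<subseteq> V2" using conn_side[OF sep cap cov h(1) nA] by blast
    then show ?thesis
      using quarter[OF sep cap cov fin h(2) h(1) h3 h(5) h(4) c1 _ nA]
        quarter[OF sep2 cap2 cov2 fin h(2) h(1) h3 h(5) h(4) c1 _ nA]
      by blast
  qed
qed



lemma comp_sub:
  assumes "C1 \<in> components H" "C2 \<in> components H" "x \<in> C1" "x \<in> C2"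
  shows "C2 \<subseteq> C1"
proof
  fix y assume y: "y \<in> C2"
  have c2: "connected_set H C2" and cl1: "\<forall>x\<in>C1. \<forall>y\<in>verts H. adj H x y \<longrightarrow> y \<in> C1"
    using assms by (auto simp: components_def)
  have V: "C2 \<subseteq> verts H" using c2 by (simp add: connected_set_iff)
  have "(x, y) \<in> (crel H C2)\<^sup>*" using c2 assms(4) y unfolding connected_set_iff by blast
  then show "y \<in> C1"
  proof (induction rule: rtrancl_induct)
    case base then show ?case using assms(3) .
  next
    case (step y z)
    then show ?case using cl1 V by (auto simp: crel_def)
  qed
qed

lemma comp_eq:
  assumes "C1 \<in> components H" "C2 \<in> components H" "x \<in> C1" "x \<in> C2"
  shows "C1 = C2"
  using comp_sub[OF assms] comp_sub[OF assms(2,1,4,3)] by blast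

lemma sym_crel:
  assumes "\<forall>x y. mult G x y = mult G y x" shows "sym (crel G B)"
  using assms unfolding sym_def crel_def adj_def by auto

lemma hub_connected:
  assumes sym: "\<forall>x y. mult G x y = mult G y x" and w: "w \<in> B" and BV: "B \<subseteq> verts G"
    and r: "\<forall>x\<in>B. (x, w) \<in> (crel G B)\<^sup>*"
  shows "connected_set G B"
proof -
  have s: "sym ((crel G B)\<^sup>*)" by (rule sym_rtrancl[OF sym_crel[OF sym]])
  have "(x, y) \<in> (crel G B)\<^sup>*" if "x \<in> B" "y \<in> B" for x y
  proof -
    have "(y, w) \<in> (crel G B)\<^sup>*" using r that by blast
    then have "(w, y) \<in> (crel G B)\<^sup>*" using s by (blast dest: symD)
    moreover have "(x, w) \<in> (crel G B)\<^sup>*" using r that by blast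
    ultimately show ?thesis by (rule rtrancl_trans[rotated])
  qed
  then show ?thesis using w BV unfolding connected_set_iff by auto
qed

lemma sym_delete:
  assumes "\<forall>x y. mult G x y = mult G y x" shows "\<forall>x y. mult (delete_verts G X) x y = mult (delete_verts G X) y x"
  using assms unfolding delete_verts_def by auto

lemma sym_reduce:
  assumes "\<forall>x y. mult G x y = mult G y x" shows "\<forall>x y. mult (reduce c G v S T) x y = mult (reduce c G v S T) y x"
  using assms unfolding reduce_def by auto

lemma singleton_connected: "x \<in> verts G \<Longrightarrow> connected_set G {x}"
  unfolding connected_set_iff by auto



theorem mainTheorem16:
  fixes G :: "'a mgraph" and c k :: nat and v :: 'a and Hv S :: "'a set"
    and T :: "'a set set"
  assumes "wf_mgraph G"
    and "c \<ge> 2"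
    and "v \<in> verts G"
    and "Hv \<subseteq> verts G - {v}"
    and "theta_free c (delete_verts G Hv)"
    and "\<forall>C\<in>D_comps G v Hv. \<exists>x\<in>C. \<exists>w\<in>Hv. adj G x w"
    and "S \<subseteq> Hv"
    and "T \<subseteq> D_comps G v Hv"
    and "has_c_stars c G S T"
    and "\<forall>C\<in>T. \<forall>w\<in>Hv. badj G w C \<longrightarrow> w \<in> S"
  shows "theta_deletion_set c k G \<longleftrightarrow> theta_deletion_set c k (reduce c G v S T)"
proof -
  note wf = assms(1) and c2 = assms(2) and vG = assms(3) and HvG = assms(4)
    and freeH = assms(5) and SHv = assms(7) and TD = assms(8) and stars = assms(9)
    and TS = assms(10)
  have fin: "finite (verts G)" and sym: "\<forall>x y. mult G x y = mult G y x"
    and supp: "\<And>x y. mult G x y > 0 \<Longrightarrow> x \<in> verts G \<and> y \<in> verts G"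
    using wf unfolding wf_mgraph_def by auto
  have c1: "c \<ge> 1" using c2 by simp
  define Gd where "Gd = delete_verts G (insert v Hv)"
  define U where "U = \<Union>T"
  define Gr where "Gr = reduce c G v S T"
  have Dc: "C \<in> components Gd" "C \<subseteq> verts G - insert v Hv" "connected_set Gd C"
    "\<And>x y. x \<in> C \<Longrightarrow> y \<in> verts G \<Longrightarrow> y \<notin> insert v Hv \<Longrightarrow> adj G x y \<Longrightarrow> y \<in> C"
    "\<exists>x\<in>C. adj G v x"
    if "C \<in> T" for C
  proof -
    have C: "C \<in> D_comps G v Hv" using that TD by blast
    then show CG: "C \<in> components Gd" by (simp add: Gd_def D_comps_def)
    then show "connected_set Gd C" by (simp add: components_def)
    then show "C \<subseteq> verts G - insert v Hv" unfolding connected_set_iff Gd_def delete_verts_def by auto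
    show "\<exists>x\<in>C. adj G v x" using C by (simp add: D_comps_def)
    fix x y assume "x \<in> C" "y \<in> verts G" "y \<notin> insert v Hv" "adj G x y"
    moreover have "x \<notin> insert v Hv" using \<open>x \<in> C\<close> \<open>connected_set Gd C\<close>
      unfolding connected_set_iff Gd_def delete_verts_def by auto
    ultimately show "y \<in> C" using CG unfolding components_def Gd_def delete_verts_def adj_def by auto
  qed
  have UV: "U \<subseteq> verts G - insert v Hv" using Dc(2) U_def by blast
  have SU: "S \<inter> U = {}" using UV SHv by blast
  have vU: "v \<notin> U" using UV by blast
  have SG: "S \<subseteq> verts G" "v \<notin> S" using SHv HvG by auto
  have Unbr: "y \<in> U" if h: "p \<in> U" "mult G p y > 0" "y \<noteq> v" "y \<notin> S" for p y
  proof -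
    obtain C where C: "C \<in> T" "p \<in> C" using h(1) U_def by blast
    have yG: "y \<in> verts G" using supp h(2) by blast
    show ?thesis
    proof (cases "y \<in> Hv")
      case True
      have "mult G y p > 0" using h(2) sym by metis
      then have "badj G y C" using C unfolding badj_def adj_def by blast
      then show ?thesis using TS C True h(4) by blast
    next
      case False
      then have "y \<in> C" using Dc(4)[OF C(1) C(2) yG] h(2,3) by (auto simp: adj_def)
      then show ?thesis using C U_def by blast
    qed
  qed
  have vGr: "verts Gr = verts G" by (simp add: Gr_def reduce_def)
  have Grm: "mult Gr a b = mult G a b" if "a \<noteq> v" "b \<noteq> v" for a b
    using that by (simp add: Gr_def reduce_def)
  have Grv: "mult Gr v b = 0" "mult Gr b v = 0" if "b \<in> U" for b
    using that by (auto simp: Gr_def reduce_def U_def)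
  have GrS: "mult Gr v w \<ge> c" if "w \<in> S" for w
    using that SU SG by (auto simp: Gr_def reduce_def U_def)
  have Grle: "mult G a b \<le> mult Gr a b" if "\<not> ((a = v \<and> b \<in> U) \<or> (b = v \<and> a \<in> U))" for a b
    using that by (auto simp: Gr_def reduce_def U_def)
  have Grle2: "mult Gr a b \<le> mult G a b" if "\<not> ((a = v \<and> b \<in> S) \<or> (b = v \<and> a \<in> S))" "\<not> ((a = v \<and> b \<in> U) \<or> (b = v \<and> a \<in> U))" for a b
    using that by (auto simp: Gr_def reduce_def U_def)
  have same: "delete_verts Gr X = delete_verts G X" if "v \<in> X" for X
    using that by (auto simp: Gr_def reduce_def delete_verts_def fun_eq_iff)
  have symGr: "\<forall>x y. mult Gr x y = mult Gr y x" unfolding Gr_def by (rule sym_reduce[OF sym])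
  show ?thesis
  proof
    assume "theta_deletion_set c k G"
    then obtain X where X: "X \<subseteq> verts G" "card X \<le> k" "theta_free c (delete_verts G X)"
      unfolding theta_deletion_set_def by blast
    show "theta_deletion_set c k (reduce c G v S T)"
    proof (cases "v \<in> X")
      case True
      then show ?thesis using X same vGr unfolding theta_deletion_set_def Gr_def by metis
    next
      case False
      obtain F where F: "\<forall>x\<in>S. F x \<subseteq> {C \<in> T. badj G x C} \<and> card (F x) = c"
        "\<forall>x\<in>S. \<forall>y\<in>S. x \<noteq> y \<longrightarrow> F x \<inter> F y = {}"
        using stars unfolding has_c_stars_def by blast
      define G' where "G' = delete_verts G X"
      have symG': "\<forall>x y. mult G' x y = mult G' y x" unfolding G'_def by (rule sym_delete[OF sym])
      have hit: "\<exists>C\<in>F w. C \<inter> X \<noteq> {}" if w: "w \<in> S" "w \<notin> X" for w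
      proof (rule ccontr)
        assume "\<not> ?thesis"
        then have CX: "\<forall>C\<in>F w. C \<inter> X = {}" by blast
        have FT: "F w \<subseteq> T" "card (F w) = c" "\<forall>C\<in>F w. badj G w C" using F w by auto
        have finF: "finite (F w)" using FT(2) c2 by (intro card_ge_0_finite) simp
        define B where "B = insert w (\<Union>(F w))"
        have wG: "w \<in> verts G" "w \<noteq> v" "w \<notin> Hv \<Longrightarrow> False" using w SG SHv by auto
        have FV: "\<Union>(F w) \<subseteq> verts G" using FT(1) Dc(2) by blast
        have BV: "B \<subseteq> verts G'" using B_def G'_def wG w CX FV by (auto simp: delete_verts_def)
        have reachw: "\<forall>x\<in>B. (x, w) \<in> (crel G' B)\<^sup>*"
        proof
          fix x assume "x \<in> B"
          show "(x, w) \<in> (crel G' B)\<^sup>*"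
          proof (cases "x = w")
            case False
            then obtain C where C: "C \<in> F w" "x \<in> C" using \<open>x \<in> B\<close> B_def by auto
            have CT: "C \<in> T" using C FT by auto
            obtain x0 where x0: "x0 \<in> C" "adj G w x0" using FT(3) C unfolding badj_def by blast
            have sub: "crel Gd C \<subseteq> crel G' B"
            proof
              fix p assume "p \<in> crel Gd C"
              then obtain a b where p: "p = (a, b)" "a \<in> C" "b \<in> C" "adj Gd a b"
                unfolding crel_def by auto
              have "a \<notin> X" "b \<notin> X" using p CX C by auto
              then show "p \<in> crel G' B" using p C B_def
                unfolding crel_def adj_def Gd_def G'_def delete_verts_def by (auto split: if_splits)
            qed
            have "(x, x0) \<in> (crel Gd C)\<^sup>*" using Dc(3)[OF CT] C x0 unfolding connected_set_iff by blast
            then have r1: "(x, x0) \<in> (crel G' B)\<^sup>*" using rtrancl_mono[OF sub] by blast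
            have "x0 \<notin> X" using x0 CX C by auto
            then have "(x0, w) \<in> crel G' B" using x0 C B_def w sym
              unfolding crel_def adj_def G'_def delete_verts_def by auto
            then show ?thesis using r1 by (meson rtrancl.rtrancl_into_rtrancl)
          qed simp
        qed
        have cB: "connected_set G' B" by (rule hub_connected[OF symG' _ BV reachw]) (simp add: B_def)
        have cv: "connected_set G' {v}" by (rule singleton_connected) (use vG False G'_def in \<open>simp add: delete_verts_def\<close>)
        have "v \<notin> \<Union>(F w)" using FT(1) Dc(2) by blast
        then have dis: "{v} \<inter> B = {}" using B_def wG(2) by auto
        have finC: "\<forall>C\<in>F w. finite C"
        proof
          fix C assume "C \<in> F w"
          then have "C \<subseteq> verts G" using FV by blast
          then show "finite C" using fin by (rule finite_subset)
        qed
        have pd: "\<forall>C\<in>F w. \<forall>C'\<in>F w. C \<noteq> C' \<longrightarrow> C \<inter> C' = {}"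
        proof (intro ballI impI)
          fix C C' assume CC: "C \<in> F w" "C' \<in> F w" "C \<noteq> C'"
          have T2: "C \<in> T" "C' \<in> T" using CC FT(1) by auto
          show "C \<inter> C' = {}"
          proof (rule ccontr)
            assume "C \<inter> C' \<noteq> {}"
            then obtain x where "x \<in> C" "x \<in> C'" by blast
            then have "C = C'" by (rule comp_eq[OF Dc(1)[OF T2(1)] Dc(1)[OF T2(2)]])
            then show False using CC(3) by simp
          qed
        qed
        have finB: "finite B" using BV fin G'_def finite_subset by (auto simp: delete_verts_def)
        have "c = (\<Sum>C\<in>F w. (1::nat))" using FT by simp
        also have "\<dots> \<le> (\<Sum>C\<in>F w. \<Sum>b\<in>C. mult G' v b)"
        proof (rule sum_mono)
          fix C assume C: "C \<in> F w"
          obtain x where x: "x \<in> C" "adj G v x" using Dc(5) C FT by blast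
          have "x \<notin> X" using x C CX by auto
          then have "1 \<le> mult G' v x" using x False unfolding G'_def delete_verts_def adj_def by auto
          also have "\<dots> \<le> (\<Sum>b\<in>C. mult G' v b)" using finC C x by (intro member_le_sum) auto
          finally show "1 \<le> (\<Sum>b\<in>C. mult G' v b)" .
        qed
        also have "\<dots> = (\<Sum>b\<in>\<Union>(F w). mult G' v b)"
          using sum.Union_disjoint[OF finC pd, of "mult G' v"] by (simp add: comp_def)
        also have "\<dots> \<le> (\<Sum>b\<in>B. mult G' v b)" using finB B_def by (intro sum_mono2) auto
        finally have "c \<le> (\<Sum>a\<in>{v}. \<Sum>b\<in>B. mult G' a b)" by simp
        then have "has_minor G' (theta c)" by (rule theta_minor_intro[OF symG' cv cB dis])
        then show False using X(3) G'_def unfolding theta_free_def by blast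
      qed
      define g where "g w = (SOME x. x \<in> X \<and> (\<exists>C\<in>F w. x \<in> C))" for w
      have gP: "g w \<in> X \<and> (\<exists>C\<in>F w. g w \<in> C)" if "w \<in> S - X" for w
      proof -
        have "\<exists>x. x \<in> X \<and> (\<exists>C\<in>F w. x \<in> C)" using hit that by blast
        then show ?thesis unfolding g_def by (rule someI_ex)
      qed
      have gU: "g ` (S - X) \<subseteq> X \<inter> U"
      proof
        fix y assume "y \<in> g ` (S - X)"
        then obtain w where w: "w \<in> S - X" "y = g w" by blast
        obtain C where C: "C \<in> F w" "g w \<in> C" using gP[OF w(1)] by blast
        have "F w \<subseteq> T" using F(1) w(1) by blast
        then have "g w \<in> U" using C U_def by blast
        then show "y \<in> X \<inter> U" using gP[OF w(1)] w(2) by blast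
      qed
      have ginj: "inj_on g (S - X)"
      proof
        fix w1 w2 assume w: "w1 \<in> S - X" "w2 \<in> S - X" "g w1 = g w2"
        obtain C1 where C1: "C1 \<in> F w1" "g w1 \<in> C1" using gP[OF w(1)] by blast
        obtain C2 where C2: "C2 \<in> F w2" "g w1 \<in> C2" using gP[OF w(2)] w(3) by auto
        have "F w1 \<subseteq> T" "F w2 \<subseteq> T" using F(1) w(1,2) by blast+
        then have T2: "C1 \<in> T" "C2 \<in> T" using C1(1) C2(1) by blast+
        have "C1 = C2" by (rule comp_eq[OF Dc(1)[OF T2(1)] Dc(1)[OF T2(2)] C1(2) C2(2)])
        show "w1 = w2"
        proof (rule ccontr)
          assume "w1 \<noteq> w2"
          then have "F w1 \<inter> F w2 = {}" using F(2) w(1,2) by blast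
          then show False using C1(1) C2(1) \<open>C1 = C2\<close> by blast
        qed
      qed
      have finX: "finite X" using X(1) fin finite_subset by auto
      have c1': "card (S - X) \<le> card (X \<inter> U)"
        using card_inj_on_le[OF ginj gU] finX by simp
      define X' where "X' = (X - U) \<union> S"
      have X'eq: "X' = (X - U) \<union> (S - X)" using X'_def SU by auto
      have "card X' \<le> card (X - U) + card (S - X)" unfolding X'eq by (rule card_Un_le)
      also have "\<dots> \<le> card (X - U) + card (X \<inter> U)" using c1' by simp
      also have "\<dots> = card X"
      proof -
        have "X = (X - U) \<union> (X \<inter> U)" by blast
        then have "card X = card ((X - U) \<union> (X \<inter> U))" by simp
        also have "\<dots> = card (X - U) + card (X \<inter> U)" using finX by (intro card_Un_disjoint) auto
        finally show ?thesis by simp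
      qed
      finally have cardX': "card X' \<le> k" using X(2) by simp
      have X'V: "X' \<subseteq> verts G" using X'_def X(1) SG by auto
      define G'' where "G'' = delete_verts Gr X'"
      define V1 where "V1 = verts G - X' - U"
      have X'U: "X' \<inter> U = {}" using X'_def SU by auto
      have sep: "sepd G'' V1 U" unfolding sepd_def
      proof (intro allI impI)
        fix a b assume a: "a \<in> V1 - U" and b: "b \<in> U - V1"
        have aX: "a \<notin> X'" "a \<notin> U" "a \<notin> S" using a V1_def X'_def by auto
        have bX: "b \<notin> X'" "b \<noteq> v" using b X'U vU by auto
        have "mult Gr a b = 0"
        proof (cases "a = v")
          case True then show ?thesis using Grv b by auto
        next
          case av: False
          have "mult G b a = 0"
          proof (rule ccontr)
            assume "mult G b a \<noteq> 0"
            then have "a \<in> U" using Unbr[of b a] b av aX by auto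
            then show False using aX by auto
          qed
          then show ?thesis using Grm[OF av bX(2)] sym by metis
        qed
        then show "mult G'' a b = 0 \<and> mult G'' b a = 0"
          using symGr unfolding G''_def delete_verts_def by auto
      qed
      have cap: "V1 \<inter> U \<subseteq> {v}" using V1_def by auto
      have cov: "verts G'' \<subseteq> V1 \<union> U" using V1_def G''_def vGr by (auto simp: delete_verts_def)
      have finG'': "finite (verts G'')" using fin G''_def vGr by (simp add: delete_verts_def)
      have sub1: "subg (res G'' V1) (delete_verts G X)"
        unfolding subg_def
      proof (intro conjI ballI)
        show "verts (res G'' V1) \<subseteq> verts (delete_verts G X)"
          using vGr G''_def V1_def X'_def by (auto simp: delete_verts_def)
      next
        fix a b assume "a \<in> verts (res G'' V1)" "b \<in> verts (res G'' V1)"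
        then have ab: "a \<in> V1" "b \<in> V1" "a \<notin> X'" "b \<notin> X'" using G''_def by (auto simp: delete_verts_def)
        have abX: "a \<notin> X" "b \<notin> X" using ab V1_def X'_def by auto
        have "\<not> ((a = v \<and> b \<in> S) \<or> (b = v \<and> a \<in> S))" "\<not> ((a = v \<and> b \<in> U) \<or> (b = v \<and> a \<in> U))"
          using ab V1_def X'_def by auto
        then show "mult (res G'' V1) a b \<le> mult (delete_verts G X) a b"
          using Grle2 ab abX G''_def by (auto simp: delete_verts_def)
      qed
      have sub2: "subg (res G'' U) (delete_verts G Hv)"
        unfolding subg_def
      proof (intro conjI ballI)
        show "verts (res G'' U) \<subseteq> verts (delete_verts G Hv)"
          using UV by (auto simp: delete_verts_def)
      next
        fix a b assume "a \<in> verts (res G'' U)" "b \<in> verts (res G'' U)"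
        then have ab: "a \<in> U" "b \<in> U" "a \<notin> X'" "b \<notin> X'" using G''_def by (auto simp: delete_verts_def)
        have "a \<notin> Hv" "b \<notin> Hv" "a \<noteq> v" "b \<noteq> v" using ab UV by auto
        then show "mult (res G'' U) a b \<le> mult (delete_verts G Hv) a b"
          using ab G''_def Grm by (auto simp: delete_verts_def)
      qed
      have "theta_free c G''"
        unfolding theta_free_def
      proof
        assume "has_minor G'' (theta c)"
        from glue[OF sep cap cov finG'' c1 this] show False
          using minor_mono[OF sub1] minor_mono[OF sub2] X(3) freeH unfolding theta_free_def by blast
      qed
      then show ?thesis using X'V cardX' vGr unfolding theta_deletion_set_def G''_def Gr_def by metis
    qed
  next
    assume "theta_deletion_set c k (reduce c G v S T)"
    then obtain X where X: "X \<subseteq> verts G" "card X \<le> k" "theta_free c (delete_verts Gr X)"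
      unfolding theta_deletion_set_def Gr_def by (auto simp: reduce_def)
    show "theta_deletion_set c k G"
    proof (cases "v \<in> X")
      case True
      then show ?thesis using X same unfolding theta_deletion_set_def by metis
    next
      case False
      have SX: "S \<subseteq> X"
      proof
        fix w assume w: "w \<in> S"
        show "w \<in> X"
        proof (rule ccontr)
          assume wX: "w \<notin> X"
          have m: "mult (delete_verts Gr X) v w \<ge> c" "mult (delete_verts Gr X) w v \<ge> c"
            using GrS[OF w] symGr wX False by (auto simp: delete_verts_def)
          have "has_minor (delete_verts Gr X) (theta c)"
            unfolding theta_minor_iff
            apply (rule exI[of _ "{v}"], rule exI[of _ "{w}"])
            using m singleton_connected[of v "delete_verts Gr X"] singleton_connected[of w "delete_verts Gr X"]
              vG SG w wX False vGr by (auto simp: delete_verts_def)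
          then show False using X(3) unfolding theta_free_def by blast
        qed
      qed
      define G' where "G' = delete_verts G X"
      define P where "P = U - X"
      define V1 where "V1 = verts G - X - P"
      define V2 where "V2 = insert v P"
      have sep: "sepd G' V1 V2" unfolding sepd_def
      proof (intro allI impI)
        fix a b assume a: "a \<in> V1 - V2" and b: "b \<in> V2 - V1"
        have bP: "b \<in> P" "b \<noteq> v" using b V1_def V2_def False vG vU P_def by auto
        have aX: "a \<notin> X" "a \<noteq> v" "a \<notin> P" using a V1_def V2_def by auto
        have "mult G b a = 0"
        proof (rule ccontr)
          assume "mult G b a \<noteq> 0"
          then have "a \<in> U" using Unbr[of b a] bP aX SX P_def by auto
          then show False using aX P_def by auto
        qed
        then show "mult G' a b = 0 \<and> mult G' b a = 0" using sym unfolding G'_def delete_verts_def by auto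
      qed
      have cap: "V1 \<inter> V2 \<subseteq> {v}" using V1_def V2_def by auto
      have cov: "verts G' \<subseteq> V1 \<union> V2" using V1_def V2_def G'_def by (auto simp: delete_verts_def)
      have finG': "finite (verts G')" using fin G'_def by (simp add: delete_verts_def)
      have PV: "P \<subseteq> verts G - X - Hv - {v}" using UV P_def by auto
      have sub1: "subg (res G' V1) (delete_verts Gr X)"
        unfolding subg_def
      proof (intro conjI ballI)
        show "verts (res G' V1) \<subseteq> verts (delete_verts Gr X)"
          using vGr G'_def by (auto simp: delete_verts_def)
      next
        fix a b assume "a \<in> verts (res G' V1)" "b \<in> verts (res G' V1)"
        then have ab: "a \<in> V1" "b \<in> V1" "a \<notin> X" "b \<notin> X" using G'_def by (auto simp: delete_verts_def)
        have "\<not> ((a = v \<and> b \<in> U) \<or> (b = v \<and> a \<in> U))" using ab V1_def P_def by auto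
        then show "mult (res G' V1) a b \<le> mult (delete_verts Gr X) a b"
          using Grle ab G'_def by (auto simp: delete_verts_def)
      qed
      have sub2: "subg (res G' V2) (delete_verts G Hv)"
        unfolding subg_def
      proof (intro conjI ballI)
        show "verts (res G' V2) \<subseteq> verts (delete_verts G Hv)"
          using G'_def V2_def PV vG HvG by (auto simp: delete_verts_def)
      next
        fix a b assume "a \<in> verts (res G' V2)" "b \<in> verts (res G' V2)"
        then have ab: "a \<in> V2" "b \<in> V2" "a \<notin> X" "b \<notin> X" using G'_def by (auto simp: delete_verts_def)
        have "a \<notin> Hv" "b \<notin> Hv" using ab V2_def PV HvG by auto
        then show "mult (res G' V2) a b \<le> mult (delete_verts G Hv) a b"
          using ab G'_def by (auto simp: delete_verts_def)
      qed
      have "theta_free c G'"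
        unfolding theta_free_def
      proof
        assume "has_minor G' (theta c)"
        from glue[OF sep cap cov finG' c1 this] show False
          using minor_mono[OF sub1] minor_mono[OF sub2] X(3) freeH unfolding theta_free_def by blast
      qed
      then show ?thesis using X unfolding theta_deletion_set_def G'_def by blast
    qed
  qed
qed

end
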